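(* In the privacy game, assume $\mathcal{Y}=\mathcal{X}$ and $\varrho\ge 0$. Let $\beta'\in B$ be given by $\beta'_{\hat x y}=1$ if $\hat x=y$ and $\beta'_{\hat x y}=0$ if $\hat x\neq y$, and let $\alpha'\in\arg\min_{\alpha\in A}[\xi(\alpha,\beta')+\varrho\zeta(\alpha)]$. Then $(\alpha',\beta')$ is a Nash equilibrium, i.e. $U(\alpha',\beta')\le U(\alpha,\beta')$ for all $\alpha\in A$ and $V(\alpha',\beta')\le V(\alpha',\beta)$ for all $\beta\in B$.
   Context: Privacy game. $\mathcal{X},\mathcal{W},\mathcal{Y}$ are finite nonempty sets; $p$ is a joint probability mass function of $(X,Z,W)$ on $\mathcal{X}\times\mathcal{X}\times\mathcal{W}$; $d:\mathcal{X}\times\mathcal{X}\to\mathbb{R}_{\ge 0}$; $\varrho$ is the privacy ratio. Sender policies: $A=\{\alpha=(\alpha_{yzw}):\alpha_{yzw}\in[0,1],\ \sum_{y\in\mathcal{Y}}\alpha_{yzw}=1\ \forall (z,w)\in\mathcal{X}\times\mathcal{W}\}$, with $\alpha_{yzw}=\mathbb{P}\{Y=y\mid Z=z,W=w\}$ ($Y$ conditionally independent of $X$ given $(Z,W)$). Receiver policies: $B=\{\beta=(\beta_{\hat x y}):\beta_{\hat x y}\in[0,1],\ \sum_{\hat x\in\mathcal{X}}\beta_{\hat x y}=1\ \forall y\in\mathcal{Y}\}$, with $\beta_{\hat x y}=\mathbb{P}\{\hat X=\hat x\mid Y=y\}$ ($\hat X$ conditionally independent of $(X,Z,W)$ given $Y$).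 Define $\xi(\alpha,\beta)=\mathbb{E}\{d(X,\hat X)\}=\sum_{x,\hat x\in\mathcal{X}}\sum_{y\in\mathcal{Y}}\sum_{z\in\mathcal{X}}\sum_{w\in\mathcal{W}}d(x,\hat x)\beta_{\hat x y}\alpha_{yzw}p(x,z,w)$ and $\zeta(\alpha)=I(Y;W)=\sum_{y,w}P_{yw}\log\frac{P_{yw}}{P_y P_w}$ (with $0\log 0=0$), where $P_{yw}=\sum_{z,x}\alpha_{yzw}p(x,z,w)$, $P_y=\sum_{w}P_{yw}$, $P_w=\sum_{z,x}p(x,z,w)$. Sender cost $U(\alpha,\beta)=\xi(\alpha,\beta)+\varrho\zeta(\alpha)$; receiver cost $V(\alpha,\beta)=\xi(\alpha,\beta)$. *)

theory Defs
  imports Complex_Main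
begin

text \<open>The finite nonempty sets \<open>\<X>\<close>, \<open>\<W>\<close> are the
  finite types \<open>'x\<close>, \<open>'w\<close>. Joint pmf \<open>p x z w\<close> of \<open>(X,Z,W)\<close>.
  Sender policy \<open>\<alpha> y z w = P{Y=y | Z=z, W=w}\<close>; receiver policy
  \<open>\<beta> xh y = P{Xhat = xh | Y = y}\<close>.\<close>

definition is_pmf3 :: "('x::finite \<Rightarrow> 'x \<Rightarrow> 'w::finite \<Rightarrow> real) \<Rightarrow> bool" where
  "is_pmf3 p \<longleftrightarrow> (\<forall>x z w. p x z w \<ge> 0) \<and> (\<Sum>x\<in>UNIV. \<Sum>z\<in>UNIV. \<Sum>w\<in>UNIV. p x z w) = 1"

definition sender_policies :: "('y::finite \<Rightarrow> 'x::finite \<Rightarrow> 'w::finite \<Rightarrow> real) set" where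
  "sender_policies = {\<alpha>. (\<forall>y z w. 0 \<le> \<alpha> y z w \<and> \<alpha> y z w \<le> 1) \<and>
                          (\<forall>z w. (\<Sum>y\<in>UNIV. \<alpha> y z w) = 1)}"

definition receiver_policies :: "('x::finite \<Rightarrow> 'y::finite \<Rightarrow> real) set" where
  "receiver_policies = {\<beta>. (\<forall>xh y. 0 \<le> \<beta> xh y \<and> \<beta> xh y \<le> 1) \<and>
                            (\<forall>y. (\<Sum>xh\<in>UNIV. \<beta> xh y) = 1)}"

definition xi :: "('x::finite \<Rightarrow> 'x \<Rightarrow> 'w::finite \<Rightarrow> real) \<Rightarrow> ('x \<Rightarrow> 'x \<Rightarrow> real)
    \<Rightarrow> ('y::finite \<Rightarrow> 'x \<Rightarrow> 'w \<Rightarrow> real) \<Rightarrow> ('x \<Rightarrow> 'y \<Rightarrow> real) \<Rightarrow> real" where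
  "xi p d \<alpha> \<beta> = (\<Sum>x\<in>UNIV. \<Sum>xh\<in>UNIV. \<Sum>y\<in>UNIV. \<Sum>z\<in>UNIV. \<Sum>w\<in>UNIV.
       d x xh * \<beta> xh y * \<alpha> y z w * p x z w)"

definition P_yw :: "('x::finite \<Rightarrow> 'x \<Rightarrow> 'w::finite \<Rightarrow> real) \<Rightarrow> ('y \<Rightarrow> 'x \<Rightarrow> 'w \<Rightarrow> real)
    \<Rightarrow> 'y \<Rightarrow> 'w \<Rightarrow> real" where
  "P_yw p \<alpha> y w = (\<Sum>z\<in>UNIV. \<Sum>x\<in>UNIV. \<alpha> y z w * p x z w)"

definition P_y :: "('x::finite \<Rightarrow> 'x \<Rightarrow> 'w::finite \<Rightarrow> real) \<Rightarrow> ('y \<Rightarrow> 'x \<Rightarrow> 'w \<Rightarrow> real)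
    \<Rightarrow> 'y \<Rightarrow> real" where
  "P_y p \<alpha> y = (\<Sum>w\<in>UNIV. P_yw p \<alpha> y w)"

definition P_w :: "('x::finite \<Rightarrow> 'x \<Rightarrow> 'w::finite \<Rightarrow> real) \<Rightarrow> 'w \<Rightarrow> real" where
  "P_w p w = (\<Sum>z\<in>UNIV. \<Sum>x\<in>UNIV. p x z w)"

text \<open>Mutual information \<open>I(Y;W)\<close> (natural logarithm), with \<open>0 log 0 = 0\<close>.\<close>
definition zeta :: "('x::finite \<Rightarrow> 'x \<Rightarrow> 'w::finite \<Rightarrow> real) \<Rightarrow> ('y::finite \<Rightarrow> 'x \<Rightarrow> 'w \<Rightarrow> real) \<Rightarrow> real" where
  "zeta p \<alpha> = (\<Sum>y\<in>UNIV. \<Sum>w\<in>UNIV.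
      (if P_yw p \<alpha> y w = 0 then 0
       else P_yw p \<alpha> y w * ln (P_yw p \<alpha> y w / (P_y p \<alpha> y * P_w p w))))"

definition sender_cost where
  "sender_cost p d rho \<alpha> \<beta> = xi p d \<alpha> \<beta> + rho * zeta p \<alpha>"

definition receiver_cost where
  "receiver_cost p d \<alpha> \<beta> = xi p d \<alpha> \<beta>"

end

theory Submission imports Defs begin
definition C :: "('x::finite \<Rightarrow> 'x \<Rightarrow> 'w::finite \<Rightarrow> real) \<Rightarrow> ('x \<Rightarrow> 'x \<Rightarrow> real)
    \<Rightarrow> ('x \<Rightarrow> 'x \<Rightarrow> 'w \<Rightarrow> real) \<Rightarrow> 'x \<Rightarrow> 'x \<Rightarrow> real" where
  "C p d \<alpha> xh y = (\<Sum>x\<in>UNIV. \<Sum>z\<in>UNIV. \<Sum>w\<in>UNIV. d x xh * \<alpha> y z w * p x z w)"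

lemma xi_C: "xi p d \<alpha> \<beta> = (\<Sum>xh\<in>UNIV. \<Sum>y\<in>UNIV. \<beta> xh y * C p d \<alpha> xh y)"
proof -
  have "xi p d \<alpha> \<beta> = (\<Sum>xh\<in>UNIV. \<Sum>x\<in>UNIV. \<Sum>y\<in>UNIV. \<Sum>z\<in>UNIV. \<Sum>w\<in>UNIV.
       d x xh * \<beta> xh y * \<alpha> y z w * p x z w)"
    unfolding xi_def by (rule sum.swap)
  also have "\<dots> = (\<Sum>xh\<in>UNIV. \<Sum>y\<in>UNIV. \<Sum>x\<in>UNIV. \<Sum>z\<in>UNIV. \<Sum>w\<in>UNIV.
       d x xh * \<beta> xh y * \<alpha> y z w * p x z w)"
    by (intro sum.cong refl sum.swap)
  also have "\<dots> = (\<Sum>xh\<in>UNIV. \<Sum>y\<in>UNIV. \<beta> xh y * C p d \<alpha> xh y)"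
    unfolding C_def by (simp add: sum_distrib_left mult.assoc mult.left_commute)
  finally show ?thesis .
qed

lemma xi_id: "xi p d \<alpha> (\<lambda>xh y. if xh = y then 1 else 0) = (\<Sum>y\<in>UNIV. C p d \<alpha> y y)"
  proof -
  have "\<And>c::real. (if xh = y then 1 else 0) * c = (if xh = y then c else 0)" for xh y :: 'x by simp
  have "(\<Sum>y\<in>UNIV. (if xh = y then 1 else 0) * C p d \<alpha> xh y) = (\<Sum>y\<in>UNIV. if xh = y then C p d \<alpha> xh y else 0)" for xh
    by (intro sum.cong) auto
  hence "(\<Sum>y\<in>UNIV. (if xh = y then 1 else 0) * C p d \<alpha> xh y) = C p d \<alpha> xh xh" for xh
    by simp
  thus ?thesis unfolding xi_C by simp
qed

definition G :: "('x::finite \<Rightarrow> 'x \<Rightarrow> 'w::finite \<Rightarrow> real) \<Rightarrow> ('w \<Rightarrow> real) \<Rightarrow> real" where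
  "G p q = (\<Sum>w\<in>UNIV. (if q w = 0 then 0 else q w * ln (q w / ((\<Sum>v\<in>UNIV. q v) * P_w p w))))"

lemma zeta_G: "zeta p \<alpha> = (\<Sum>y\<in>UNIV. G p (P_yw p \<alpha> y))"
  unfolding zeta_def G_def P_y_def by simp

lemma pt_aux:
  fixes a b A S P :: real
  assumes "a > 0" "a \<le> A" "a + b \<le> S" "b \<ge> 0" "P > 0"
  shows "a * ln ((a+b)/(S*P)) \<le> a * ln (a/(A*P)) - (a - A*(a+b)/S)"
proof -
  have pos: "A > 0" "S > 0" "a + b > 0" using assms by auto
  have "ln (A*(a+b)/(a*S)) \<le> A*(a+b)/(a*S) - 1"
    by (rule ln_le_minus_one) (use pos assms in auto)
  hence "a * ln (A*(a+b)/(a*S)) \<le> a * (A*(a+b)/(a*S) - 1)"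
    using assms by (simp add: mult_left_mono)
  also have "a * (A*(a+b)/(a*S) - 1) = A*(a+b)/S - a" using pos assms by (simp add: field_simps)
  also have "ln (A*(a+b)/(a*S)) = ln ((a+b)/(S*P)) - ln (a/(A*P))"
    using pos assms by (simp add: ln_div ln_mult)
  finally show ?thesis by (simp add: algebra_simps)
qed

lemma pt:
  fixes a b A B P :: real
  assumes "a \<ge> 0" "b \<ge> 0" "a \<le> A" "b \<le> B" "a \<noteq> 0 \<or> b \<noteq> 0 \<longrightarrow> P > 0"
  shows "(if a+b=0 then 0 else (a+b)*ln((a+b)/((A+B)*P))) \<le>
    (if a=0 then 0 else a*ln(a/(A*P))) + (if b=0 then 0 else b*ln(b/(B*P)))
    + (if a=0 then 0 else A*(a+b)/(A+B) - a) + (if b=0 then 0 else B*(a+b)/(A+B) - b)"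
proof (cases "a + b = 0")
  case True
  hence "a = 0" "b = 0" using assms by auto
  thus ?thesis by simp
next
  case False
  hence P: "P > 0" using assms by auto
  have S: "A + B > 0" using False assms by auto
  have ia: "a * ln ((a+b)/((A+B)*P)) \<le> (if a=0 then 0 else a*ln(a/(A*P))) + (if a=0 then 0 else A*(a+b)/(A+B) - a)"
  proof (cases "a = 0")
    case True thus ?thesis using assms S by simp
  next
    case False
    thus ?thesis using pt_aux[of a A b "A+B" P] assms P by auto
  qed
  have ib: "b * ln ((a+b)/((A+B)*P)) \<le> (if b=0 then 0 else b*ln(b/(B*P))) + (if b=0 then 0 else B*(a+b)/(A+B) - b)"
  proof (cases "b = 0")
    case True thus ?thesis using assms S by simp
  next
    case False
    thus ?thesis using pt_aux[of b B a "A+B" P] assms P by (auto simp: add.commute)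
  qed
  show ?thesis using ia ib False by (simp add: distrib_right)
qed

lemma rem_le:
  fixes a b :: "'w::finite \<Rightarrow> real"
  assumes "\<forall>w. a w \<ge> 0" "\<forall>w. b w \<ge> 0"
  shows "(\<Sum>w\<in>UNIV. (if a w=0 then 0 else (\<Sum>v\<in>UNIV. a v)*(a w+b w)/((\<Sum>v\<in>UNIV. a v)+(\<Sum>v\<in>UNIV. b v)) - a w)) \<le> 0"
proof -
  define A where "A = (\<Sum>v\<in>UNIV. a v)"
  define B where "B = (\<Sum>v\<in>UNIV. b v)"
  have A0: "A \<ge> 0" "B \<ge> 0" unfolding A_def B_def using assms by (auto intro: sum_nonneg)
  have "(\<Sum>w\<in>UNIV. (if a w=0 then 0 else A*(a w+b w)/(A+B) - a w)) \<le> (\<Sum>w\<in>UNIV. A*(a w+b w)/(A+B) - a w)"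
    by (rule sum_mono) (use assms A0 in auto)
  also have "\<dots> = A*(A+B)/(A+B) - A"
    by (simp add: sum_subtractf sum_divide_distrib[symmetric] sum_distrib_left[symmetric] sum.distrib A_def B_def)
  also have "\<dots> \<le> 0" using A0 by (cases "A+B = 0") auto
  finally show ?thesis unfolding A_def B_def .
qed

lemma merge:
  fixes a b :: "'w::finite \<Rightarrow> real"
  assumes "\<forall>w. a w \<ge> 0" "\<forall>w. b w \<ge> 0"
    "\<forall>w. a w \<noteq> 0 \<longrightarrow> P_w p w > 0" "\<forall>w. b w \<noteq> 0 \<longrightarrow> P_w p w > 0"
  shows "G p (\<lambda>w. a w + b w) \<le> G p a + G p b"
proof -
  define A where "A = (\<Sum>v\<in>UNIV. a v)"
  define B where "B = (\<Sum>v\<in>UNIV. b v)"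
  have sAB: "(\<Sum>v\<in>UNIV. a v + b v) = A + B" by (simp add: A_def B_def sum.distrib)
  have aA: "a w \<le> A" for w unfolding A_def
    by (rule member_le_sum) (use assms in auto)
  have bB: "b w \<le> B" for w unfolding B_def
    by (rule member_le_sum) (use assms in auto)
  have "G p (\<lambda>w. a w + b w) \<le> (\<Sum>w\<in>UNIV.
     (if a w=0 then 0 else a w*ln(a w/(A*P_w p w))) + (if b w=0 then 0 else b w*ln(b w/(B*P_w p w)))
    + (if a w=0 then 0 else A*(a w+b w)/(A+B) - a w) + (if b w=0 then 0 else B*(a w+b w)/(A+B) - b w))"
    unfolding G_def sAB
    by (rule sum_mono, rule pt) (use assms aA bB in auto)
  also have "\<dots> = G p a + G p b + (\<Sum>w\<in>UNIV. (if a w=0 then 0 else A*(a w+b w)/(A+B) - a w))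
       + (\<Sum>w\<in>UNIV. (if b w=0 then 0 else B*(a w+b w)/(A+B) - b w))"
    unfolding G_def A_def[symmetric] B_def[symmetric]
    by (simp add: sum.distrib)
  also have "\<dots> \<le> G p a + G p b"
  proof -
    have 1: "(\<Sum>w\<in>UNIV. (if a w=0 then 0 else A*(a w+b w)/(A+B) - a w)) \<le> 0"
      using rem_le[OF assms(1,2)] unfolding A_def B_def .
    have 2: "(\<Sum>w\<in>UNIV. (if b w=0 then 0 else B*(a w+b w)/(A+B) - b w)) \<le> 0"
    proof -
      have e: "B + A = A + B" "\<And>w. b w + a w = a w + b w" by auto
      show ?thesis using rem_le[OF assms(2,1)] unfolding A_def[symmetric] B_def[symmetric] by (simp only: e)
    qed
    show ?thesis using 1 2 by simp
  qed
  finally show ?thesis .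
qed


lemma Pyw_nonneg: assumes "is_pmf3 p" "\<alpha> \<in> sender_policies" shows "P_yw p \<alpha> y w \<ge> 0"
  using assms unfolding P_yw_def is_pmf3_def sender_policies_def by (auto intro!: sum_nonneg)

lemma Pyw_pos: assumes "is_pmf3 p" "\<alpha> \<in> sender_policies" "P_yw p \<alpha> y w \<noteq> 0" shows "P_w p w > 0"
proof -
  have "P_yw p \<alpha> y w \<le> P_w p w"
    unfolding P_yw_def P_w_def
    using assms(1,2) unfolding is_pmf3_def sender_policies_def
    by (auto intro!: sum_mono mult_left_le_one_le)
  thus ?thesis using Pyw_nonneg[OF assms(1,2), of y w] assms(3) by linarith
qed

lemma G_zero: "G p (\<lambda>w. 0) = 0" unfolding G_def by simp

lemma best_response:
  fixes p :: "'x::finite \<Rightarrow> 'x \<Rightarrow> 'w::finite \<Rightarrow> real" and \<alpha>' :: "'x \<Rightarrow> 'x \<Rightarrow> 'w \<Rightarrow> real"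
  assumes pmf: "is_pmf3 p" and rho: "rho \<ge> 0"
    and \<beta>': "\<beta>' = (\<lambda>xh y. if xh = y then 1 else 0)"
    and a': "\<alpha>' \<in> sender_policies"
    and opt: "\<forall>\<alpha>\<in>sender_policies. xi p d \<alpha>' \<beta>' + rho * zeta p \<alpha>' \<le> xi p d \<alpha> \<beta>' + rho * zeta p \<alpha>"
  shows "C p d \<alpha>' y y \<le> C p d \<alpha>' t y"
proof (rule ccontr)
  assume "\<not> ?thesis"
  hence lt: "C p d \<alpha>' t y < C p d \<alpha>' y y" by simp
  hence ty: "t \<noteq> y" by auto
  define a2 where "a2 = (\<lambda>y0 z w. if y0 = y then 0 else if y0 = t then \<alpha>' t z w + \<alpha>' y z w else \<alpha>' y0 z w)"
  have a2e: "a2 y0 z w = \<alpha>' y0 z w + (if y0 = t then \<alpha>' y z w else 0) - (if y0 = y then \<alpha>' y z w else 0)" for y0 z w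
    unfolding a2_def using ty by auto
  have a'b: "0 \<le> \<alpha>' y0 z w" "\<alpha>' y0 z w \<le> 1" "(\<Sum>y\<in>UNIV. \<alpha>' y z w) = 1" for y0 z w
    using a' unfolding sender_policies_def by auto
  have le1: "\<alpha>' t z w + \<alpha>' y z w \<le> 1" for z w
  proof -
    have "(\<Sum>y0\<in>{t,y}. \<alpha>' y0 z w) \<le> (\<Sum>y0\<in>UNIV. \<alpha>' y0 z w)"
      by (rule sum_mono2) (auto simp: a'b)
    thus ?thesis using ty a'b(3)[of z w] by simp
  qed
  have a2s: "a2 \<in> sender_policies"
    unfolding sender_policies_def
  proof (intro CollectI conjI allI)
    fix y0 z w
    show "0 \<le> a2 y0 z w" "a2 y0 z w \<le> 1" unfolding a2_def using a'b le1 by (auto intro: add_nonneg_nonneg)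
  next
    fix z w
    show "(\<Sum>y0\<in>UNIV. a2 y0 z w) = 1" unfolding a2e
      by (simp add: sum_subtractf sum.distrib a'b(3))
  qed
  have Ca2: "C p d a2 y0 y0 = C p d \<alpha>' y0 y0 + (if y0 = t then C p d \<alpha>' t y else 0) - (if y0 = y then C p d \<alpha>' y y else 0)" for y0
  proof -
    consider "y0 = y" | "y0 = t" | "y0 \<noteq> y" "y0 \<noteq> t" by blast
    thus ?thesis
    proof cases
      case 1 thus ?thesis using ty unfolding C_def a2_def by simp
    next
      case 2 thus ?thesis using ty unfolding C_def a2_def by (simp add: distrib_left distrib_right sum.distrib)
    next
      case 3 thus ?thesis unfolding C_def a2_def by simp
    qed
  qed
  have xi2: "xi p d a2 \<beta>' = xi p d \<alpha>' \<beta>' + C p d \<alpha>' t y - C p d \<alpha>' y y"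
    unfolding \<beta>' xi_id Ca2 by (simp add: sum_subtractf sum.distrib)
  have P2: "P_yw p a2 y0 = (if y0 = y then (\<lambda>w. 0) else if y0 = t then (\<lambda>w. P_yw p \<alpha>' t w + P_yw p \<alpha>' y w) else P_yw p \<alpha>' y0)" for y0
    using ty unfolding P_yw_def a2_def by (auto simp: distrib_right sum.distrib)
  have G2: "G p (P_yw p a2 y0) \<le> G p (P_yw p \<alpha>' y0) + (if y0 = t then G p (P_yw p \<alpha>' y) else 0) - (if y0 = y then G p (P_yw p \<alpha>' y) else 0)" for y0
  proof -
    consider "y0 = y" | "y0 = t" | "y0 \<noteq> y" "y0 \<noteq> t" by blast
    thus ?thesis
    proof cases
      case 1 thus ?thesis using ty unfolding P2 by (simp add: G_zero)
    next
      case 2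
      have "G p (\<lambda>w. P_yw p \<alpha>' t w + P_yw p \<alpha>' y w) \<le> G p (P_yw p \<alpha>' t) + G p (P_yw p \<alpha>' y)"
        by (rule merge) (use Pyw_nonneg[OF pmf a'] Pyw_pos[OF pmf a'] in auto)
      thus ?thesis using 2 ty unfolding P2 by simp
    next
      case 3 thus ?thesis unfolding P2 by simp
    qed
  qed
  have z2: "zeta p a2 \<le> zeta p \<alpha>'"
  proof -
    have "zeta p a2 \<le> (\<Sum>y0\<in>UNIV. G p (P_yw p \<alpha>' y0) + (if y0 = t then G p (P_yw p \<alpha>' y) else 0) - (if y0 = y then G p (P_yw p \<alpha>' y) else 0))"
      unfolding zeta_G by (rule sum_mono) (rule G2)
    also have "\<dots> = zeta p \<alpha>'" unfolding zeta_G by (simp add: sum_subtractf sum.distrib)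
    finally show ?thesis .
  qed
  have "xi p d a2 \<beta>' + rho * zeta p a2 < xi p d \<alpha>' \<beta>' + rho * zeta p \<alpha>'"
    using xi2 lt z2 rho mult_left_mono[OF z2 rho] by linarith
  thus False using opt a2s by fastforce
qed

theorem mainTheorem4:
  fixes p :: "'x::finite \<Rightarrow> 'x \<Rightarrow> 'w::finite \<Rightarrow> real"
    and d :: "'x \<Rightarrow> 'x \<Rightarrow> real"
    and rho :: real
    and \<alpha>' :: "'x \<Rightarrow> 'x \<Rightarrow> 'w \<Rightarrow> real"
    and \<beta>' :: "'x \<Rightarrow> 'x \<Rightarrow> real"
  assumes "is_pmf3 p"
    and "\<forall>x xh. d x xh \<ge> 0"
    and "rho \<ge> 0"
    and "\<beta>' = (\<lambda>xh y. if xh = y then 1 else 0)"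
    and "\<alpha>' \<in> sender_policies"
    and "\<forall>\<alpha>\<in>sender_policies. xi p d \<alpha>' \<beta>' + rho * zeta p \<alpha>' \<le> xi p d \<alpha> \<beta>' + rho * zeta p \<alpha>"
  shows "\<beta>' \<in> receiver_policies
         \<and> (\<forall>\<alpha>\<in>sender_policies. sender_cost p d rho \<alpha>' \<beta>' \<le> sender_cost p d rho \<alpha> \<beta>')
         \<and> (\<forall>\<beta>\<in>receiver_policies. receiver_cost p d \<alpha>' \<beta>' \<le> receiver_cost p d \<alpha>' \<beta>)"
proof (intro conjI ballI)
  show "\<beta>' \<in> receiver_policies" unfolding receiver_policies_def assms(4) by auto
next
  fix \<alpha> :: "'x \<Rightarrow> 'x \<Rightarrow> 'w \<Rightarrow> real" assume "\<alpha> \<in> sender_policies"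
  thus "sender_cost p d rho \<alpha>' \<beta>' \<le> sender_cost p d rho \<alpha> \<beta>'"
    using assms(6) unfolding sender_cost_def by blast
next
  fix \<beta> :: "'x \<Rightarrow> 'x \<Rightarrow> real" assume b: "\<beta> \<in> receiver_policies"
  have br: "C p d \<alpha>' y y \<le> C p d \<alpha>' xh y" for xh y
    by (rule best_response[OF assms(1,3,4,5,6)])
  have "receiver_cost p d \<alpha>' \<beta>' = (\<Sum>y\<in>UNIV. C p d \<alpha>' y y)"
    unfolding receiver_cost_def assms(4) xi_id ..
  also have "\<dots> = (\<Sum>y\<in>UNIV. (\<Sum>xh\<in>UNIV. \<beta> xh y) * C p d \<alpha>' y y)"
    using b unfolding receiver_policies_def by simp
  also have "\<dots> = (\<Sum>xh\<in>UNIV. \<Sum>y\<in>UNIV. \<beta> xh y * C p d \<alpha>' y y)"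
    by (simp add: sum_distrib_right) (rule sum.swap)
  also have "\<dots> \<le> (\<Sum>xh\<in>UNIV. \<Sum>y\<in>UNIV. \<beta> xh y * C p d \<alpha>' xh y)"
    using b br unfolding receiver_policies_def by (auto intro!: sum_mono mult_left_mono)
  also have "\<dots> = receiver_cost p d \<alpha>' \<beta>" unfolding receiver_cost_def xi_C ..
  finally show "receiver_cost p d \<alpha>' \<beta>' \<le> receiver_cost p d \<alpha>' \<beta>" .
qed

end
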